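(* Let $d\geq 2$ and let $\mathsf{K}$ be a neighborly $d$-sphere obtained from the boundary complex of the cyclic polytope $C_{d+1}(n)$ by applying one single element extension, which adds a new vertex $w$. Then $\mathcal{F}(\mathsf{K})$ is $2$-colorable.
   Context: $C_{d+1}(n)$ is the cyclic $(d+1)$-polytope on $n$ vertices labelled $1,\dots,n$ along the moment curve; its facets are the $(d+1)$-subsets $f\subseteq[n]$ such that for all $i<j$ not in $f$, $|\{k\in f:i<k<j\}|$ is even. A simplicial complex on vertex set $V$ is $k$-neighborly if every $k$-subset of $V$ is a face; a neighborly $d$-sphere is a simplicial $d$-sphere that is $\lfloor (d+1)/2\rfloor$-neighborly. A PL $d$-ball $\mathsf{B}$ is $k$-stacked if every face of dimension at most $d-k-1$ lies in its boundary $\partial\mathsf{B}$. Single element extension: given a neighborly PL $d$-sphere $\mathsf{K}'$ on $V$ and a subcomplex $\mathsf{B}\subseteq\mathsf{K}'$ which is a PL $d$-ball that is $(\lfloor (d+1)/2\rfloor-1)$-neighborly with respect to $V$ and $(\lfloor (d+1)/2\rfloor-1)$-stacked, and a new vertex $w\notin V$, the result is $(\mathsf{K}'\setminus\mathsf{B})\cup(\partial\mathsf{B}*\{\emptyset,\{w\}\})$, where $*$ is the join $\mathcal{A}*\mathcal{B}=\{a\cup b: a\in\mathcal{A},b\in\mathcal{B}\}$. $\mathcal{F}(\mathsf{K})$ is the facet hypergraph; $2$-colorable means a $2$-coloring of vertices with no monochromatic facet. *)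

theory Defs
  imports Main
begin

text \<open>Abstract simplicial complexes are represented by their sets of faces
  (including the empty face).\<close>

definition simplicial_complex :: "'a set set \<Rightarrow> bool" where
  "simplicial_complex K \<longleftrightarrow> finite K \<and> (\<forall>\<sigma>\<in>K. finite \<sigma>) \<and> (\<forall>\<sigma>\<in>K. \<forall>\<tau>. \<tau> \<subseteq> \<sigma> \<longrightarrow> \<tau> \<in> K)"

text \<open>Facets of the cyclic polytope C_{d+1}(n) on vertices 1..n (Gale evenness).\<close>
definition cyclic_facets :: "nat \<Rightarrow> nat \<Rightarrow> nat set set" where
  "cyclic_facets d n = {f. f \<subseteq> {1..n} \<and> card f = d + 1 \<and>
     (\<forall>i\<in>{1..n}. \<forall>j\<in>{1..n}. i < j \<and> i \<notin> f \<and> j \<notin> f \<longrightarrow>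
        even (card {k\<in>f. i < k \<and> k < j}))}"

definition cyclic_boundary :: "nat \<Rightarrow> nat \<Rightarrow> nat set set" where
  "cyclic_boundary d n = {\<sigma>. \<exists>f\<in>cyclic_facets d n. \<sigma> \<subseteq> f}"

definition facets :: "'a set set \<Rightarrow> 'a set set" where
  "facets K = {\<sigma>\<in>K. \<forall>\<tau>\<in>K. \<sigma> \<subseteq> \<tau> \<longrightarrow> \<tau> = \<sigma>}"

definition stellar :: "'a set set \<Rightarrow> 'a set \<Rightarrow> 'a \<Rightarrow> 'a set set" where
  "stellar K \<sigma> v = (K - {\<tau>\<in>K. \<sigma> \<subseteq> \<tau>}) \<union>
     {insert v (\<alpha> \<union> \<rho>) | \<alpha> \<rho>. \<alpha> \<subset> \<sigma> \<and> \<rho> \<in> K \<and> \<rho> \<inter> \<sigma> = {} \<and> \<rho> \<union> \<sigma> \<in> K}"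

definition stellar_step :: "nat set set \<Rightarrow> nat set set \<Rightarrow> bool" where
  "stellar_step K L \<longleftrightarrow> simplicial_complex K \<and>
     ((\<exists>\<sigma> v. \<sigma> \<in> K \<and> \<sigma> \<noteq> {} \<and> v \<notin> \<Union>K \<and> L = stellar K \<sigma> v) \<or>
      (\<exists>f. inj_on f (\<Union>K) \<and> L = (\<lambda>\<sigma>. f ` \<sigma>) ` K))"

text \<open>PL homeomorphism of finite simplicial complexes = stellar equivalence
  (Alexander--Newman): equivalence closure of stellar subdivisions and isomorphisms.\<close>
definition pl_homeomorphic :: "nat set set \<Rightarrow> nat set set \<Rightarrow> bool" where
  "pl_homeomorphic = (\<lambda>K L. stellar_step K L \<or> stellar_step L K)\<^sup>*\<^sup>*"

definition PL_ball :: "nat \<Rightarrow> nat set set \<Rightarrow> bool" where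
  "PL_ball d B \<longleftrightarrow> simplicial_complex B \<and> pl_homeomorphic B (Pow {0..d})"

definition PL_sphere :: "nat \<Rightarrow> nat set set \<Rightarrow> bool" where
  "PL_sphere d K \<longleftrightarrow> simplicial_complex K \<and> pl_homeomorphic K (Pow {0..d+1} - {{0..d+1}})"

definition bdry :: "nat \<Rightarrow> 'a set set \<Rightarrow> 'a set set" where
  "bdry d B = {\<sigma>. \<exists>\<rho>\<in>B. \<sigma> \<subseteq> \<rho> \<and> card \<rho> = d \<and>
      card {f\<in>B. card f = d + 1 \<and> \<rho> \<subseteq> f} = 1}"

definition join :: "'a set set \<Rightarrow> 'a set set \<Rightarrow> 'a set set" where
  "join A B = {a \<union> b | a b. a \<in> A \<and> b \<in> B}"

definition neighborly_wrt :: "nat \<Rightarrow> 'a set \<Rightarrow> 'a set set \<Rightarrow> bool" where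
  "neighborly_wrt k V B \<longleftrightarrow> (\<forall>S. S \<subseteq> V \<and> card S = k \<longrightarrow> S \<in> B)"

text \<open>k-stacked d-ball: every face of dimension at most d-k-1 (i.e. at most
  d-k vertices) lies in the boundary.\<close>
definition stacked :: "nat \<Rightarrow> nat \<Rightarrow> 'a set set \<Rightarrow> bool" where
  "stacked d k B \<longleftrightarrow> (\<forall>\<sigma>\<in>B. card \<sigma> \<le> d - k \<longrightarrow> \<sigma> \<in> bdry d B)"

definition single_element_extension :: "nat \<Rightarrow> 'a set set \<Rightarrow> 'a set set \<Rightarrow> 'a \<Rightarrow> 'a set set" where
  "single_element_extension d K' B w = (K' - B) \<union> join (bdry d B) {{}, {w}}"

definition two_colorable :: "'a set set \<Rightarrow> bool" where
  "two_colorable H \<longleftrightarrow> (\<exists>c :: 'a \<Rightarrow> bool. \<forall>f\<in>H. \<exists>x\<in>f. \<exists>y\<in>f. c x \<noteq> c y)"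

end

theory Submission
  imports Defs
begin

lemma gale_even:
  assumes "g \<in> cyclic_facets d n" "1 \<le> i" "j \<le> n" "i < j" "i \<notin> g" "j \<notin> g"
  shows "even (card {k\<in>g. i < k \<and> k < j})"
  using assms unfolding cyclic_facets_def by auto

lemma gale_basic:
  assumes "g \<in> cyclic_facets d n"
  shows "g \<subseteq> {1..n}" "card g = d + 1" "finite g"
  using assms unfolding cyclic_facets_def by (auto intro: finite_subset)

lemma gale_isolated:
  assumes "g \<in> cyclic_facets d n" "a \<in> g" "1 < a" "a < n"
  shows "a - 1 \<in> g \<or> a + 1 \<in> g"
proof (rule ccontr)
  assume h: "\<not> (a - 1 \<in> g \<or> a + 1 \<in> g)"
  have "even (card {k\<in>g. a - 1 < k \<and> k < a + 1})"
    using gale_even[OF assms(1), of "a - 1" "a + 1"] h assms(3,4) by auto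
  moreover have "{k\<in>g. a - 1 < k \<and> k < a + 1} = {a}" using assms(2,3) by auto
  ultimately show False by simp
qed

lemma gale_block:
  assumes "g \<in> cyclic_facets d n" "a \<in> g" "a+1 \<in> g" "a+2 \<in> g" "1 < a" "a + 2 < n"
    "a - 1 \<notin> g" "a + 3 \<notin> g"
  shows False
proof -
  have "even (card {k\<in>g. a - 1 < k \<and> k < a + 3})"
    using gale_even[OF assms(1), of "a - 1" "a + 3"] assms(7,8) assms(5,6) by auto
  moreover have "{k\<in>g. a - 1 < k \<and> k < a + 3} = {a, a+1, a+2}" using assms(2,3,4,5) by auto
  ultimately show False by simp
qed

lemma par_m1: "1 \<le> (a::nat) \<Longrightarrow> (a - 1) mod 2 \<noteq> a mod 2"
  by (cases a) (auto simp: mod_Suc)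

lemma par_p1: "(Suc a) mod 2 \<noteq> (a::nat) mod 2"
  by (auto simp: mod_Suc)

lemma gale_core:
  assumes "g \<in> cyclic_facets d n" "g = insert x \<rho>" "\<forall>y\<in>\<rho>. y mod 2 = r"
    "a \<in> \<rho>" "b \<in> \<rho>" "1 < a" "a < b" "b < n"
  shows False
proof -
  have ra: "a mod 2 = r" and rb: "b mod 2 = r" using assms(3,4,5) by auto
  have ag: "a \<in> g" and bg: "b \<in> g" using assms(2,4,5) by auto
  have an: "a < n" and b1: "1 < b" using assms(6,7,8) by linarith+
  have nr: "\<And>y. y mod 2 \<noteq> r \<Longrightarrow> y \<notin> \<rho>" using assms(3) by blast
  have am: "a - 1 \<notin> \<rho>" using nr par_m1[of a] ra assms(6) by simp
  have ap: "a + 1 \<notin> \<rho>" using nr par_p1[of a] ra by simp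
  have bm: "b - 1 \<notin> \<rho>" using nr par_m1[of b] rb b1 by simp
  have bp: "b + 1 \<notin> \<rho>" using nr par_p1[of b] rb by simp
  have "a - 1 \<in> g \<or> a + 1 \<in> g" using gale_isolated[OF assms(1) ag assms(6) an] .
  then have xa: "x = a - 1 \<or> x = a + 1" using am ap assms(2) by blast
  have "b - 1 \<in> g \<or> b + 1 \<in> g" using gale_isolated[OF assms(1) bg b1 assms(8)] .
  then have xb: "x = b - 1 \<or> x = b + 1" using bm bp assms(2) by blast
  have x: "x = a + 1" and b: "b = a + 2" using xa xb assms(6,7) by linarith+
  have "a - 1 \<noteq> x" using x by linarith
  then have a1: "a - 1 \<notin> g" using am assms(2) by blast
  have e3: "(a + 3) mod 2 = (a + 1) mod 2" by presburger
  have "(a + 3) mod 2 \<noteq> r" using ra par_p1[of a] e3 by simp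
  then have "a + 3 \<notin> \<rho>" using nr by blast
  moreover have "a + 3 \<noteq> x" using x by linarith
  ultimately have a3: "a + 3 \<notin> g" using assms(2) by blast
  have a2: "a + 1 \<in> g" "a + 2 \<in> g" using x b bg assms(2) by auto
  have "a + 2 < n" using b assms(8) by linarith
  then show False using gale_block[OF assms(1) ag a2 assms(6) _ a1 a3] by blast
qed

lemma facet_char:
  assumes sc: "simplicial_complex B" and BK: "B \<subseteq> cyclic_boundary d n"
    and f: "f \<in> facets (single_element_extension d (cyclic_boundary d n) B w)"
  shows "(f \<in> cyclic_facets d n \<and> f \<notin> B) \<or>
         (\<exists>\<rho>\<in>B. card \<rho> = d \<and> (\<exists>g\<in>cyclic_facets d n. \<rho> \<subseteq> g) \<and> f = insert w \<rho>)"
proof -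
  let ?K = "single_element_extension d (cyclic_boundary d n) B w"
  have fK: "f \<in> ?K" and fmax: "\<And>\<tau>. \<tau> \<in> ?K \<Longrightarrow> f \<subseteq> \<tau> \<Longrightarrow> \<tau> = f"
    using f unfolding facets_def by auto
  have down: "\<And>\<sigma> \<tau>. \<sigma> \<in> B \<Longrightarrow> \<tau> \<subseteq> \<sigma> \<Longrightarrow> \<tau> \<in> B"
    using sc unfolding simplicial_complex_def by blast
  show ?thesis
  proof (cases "f \<in> cyclic_boundary d n - B")
    case True
    then obtain g where g: "g \<in> cyclic_facets d n" "f \<subseteq> g" and fB: "f \<notin> B"
      unfolding cyclic_boundary_def by auto
    have gB: "g \<notin> B" using down g(2) fB by blast
    have "g \<in> ?K" using g gB unfolding single_element_extension_def cyclic_boundary_def by auto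
    then have "g = f" using fmax g(2) by blast
    then show ?thesis using g gB by auto
  next
    case False
    then have "f \<in> join (bdry d B) {{}, {w}}" using fK unfolding single_element_extension_def by auto
    then obtain a b where ab: "f = a \<union> b" "a \<in> bdry d B" "b \<in> {{}, {w}}"
      unfolding join_def by auto
    then obtain \<rho> where r: "\<rho> \<in> B" "a \<subseteq> \<rho>" "card \<rho> = d"
      "card {f\<in>B. card f = d + 1 \<and> \<rho> \<subseteq> f} = 1"
      unfolding bdry_def by auto
    have "\<rho> \<in> bdry d B" unfolding bdry_def using r by auto
    then have "\<rho> \<union> {w} \<in> join (bdry d B) {{}, {w}}" unfolding join_def by blast
    then have "insert w \<rho> \<in> ?K" unfolding single_element_extension_def by auto
    moreover have "f \<subseteq> insert w \<rho>" using ab r by auto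
    ultimately have "insert w \<rho> = f" using fmax by blast
    moreover obtain g where "g \<in> cyclic_facets d n" "\<rho> \<subseteq> g"
      using r(1) BK unfolding cyclic_boundary_def by auto
    ultimately show ?thesis using r by auto
  qed
qed

lemma color_lemma:
  assumes sc: "simplicial_complex B" and BK: "B \<subseteq> cyclic_boundary d n"
    and w: "w \<notin> {1..n}"
    and A: "\<And>g. g \<in> cyclic_facets d n \<Longrightarrow> g \<notin> B \<Longrightarrow> (\<exists>y\<in>g. y \<in> S) \<and> (\<exists>z\<in>g. z \<notin> S)"
    and R: "\<And>\<rho> g. \<rho> \<in> B \<Longrightarrow> card \<rho> = d \<Longrightarrow> g \<in> cyclic_facets d n \<Longrightarrow> \<rho> \<subseteq> g \<Longrightarrow> \<exists>z\<in>\<rho>. z \<notin> S"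
  shows "two_colorable (facets (single_element_extension d (cyclic_boundary d n) B w))"
  unfolding two_colorable_def
proof (intro exI[of _ "\<lambda>x. x = w \<or> x \<in> S"] ballI)
  fix f assume f: "f \<in> facets (single_element_extension d (cyclic_boundary d n) B w)"
  show "\<exists>x\<in>f. \<exists>y\<in>f. (x = w \<or> x \<in> S) \<noteq> (y = w \<or> y \<in> S)"
    using facet_char[OF sc BK f]
  proof
    assume h: "f \<in> cyclic_facets d n \<and> f \<notin> B"
    then obtain y z where "y \<in> f" "y \<in> S" "z \<in> f" "z \<notin> S" using A by blast
    moreover have "z \<noteq> w" using `z \<in> f` h gale_basic(1)[of f d n] w by auto
    ultimately show ?thesis by blast
  next
    assume "\<exists>\<rho>\<in>B. card \<rho> = d \<and> (\<exists>g\<in>cyclic_facets d n. \<rho> \<subseteq> g) \<and> f = insert w \<rho>"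
    then obtain \<rho> g where h: "\<rho> \<in> B" "card \<rho> = d" "g \<in> cyclic_facets d n" "\<rho> \<subseteq> g" "f = insert w \<rho>"
      by blast
    then obtain z where "z \<in> \<rho>" "z \<notin> S" using R by blast
    moreover have "z \<noteq> w" using `z \<in> \<rho>` h gale_basic(1)[of g d n] w by auto
    ultimately show ?thesis using h(5) by blast
  qed
qed

lemma gale_interior:
  assumes "g \<in> cyclic_facets d n" "d \<ge> 2"
  obtains a where "a \<in> g" "1 < a" "a < n"
proof -
  have g: "g \<subseteq> {1..n}" "card g = d + 1" using gale_basic[OF assms(1)] by auto
  have "\<not> g \<subseteq> {1, n}"
  proof
    assume "g \<subseteq> {1, n}"
    then have "card g \<le> card {1, n}" by (intro card_mono) auto
    also have "\<dots> \<le> 2" by (simp add: card_insert_le_m1)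
    finally show False using g assms(2) by simp
  qed
  then obtain a where "a \<in> g" "a \<noteq> 1" "a \<noteq> n" by auto
  moreover then have "1 < a" "a < n" using g(1) by force+
  ultimately show ?thesis using that by blast
qed

lemma gale_G1:
  assumes "g \<in> cyclic_facets 2 n" "2 \<le> n"
  shows "1 \<in> g \<or> n \<in> g"
proof (rule ccontr)
  assume h: "\<not> (1 \<in> g \<or> n \<in> g)"
  have g: "g \<subseteq> {1..n}" "card g = 3" using gale_basic[OF assms(1)] by auto
  have "even (card {k\<in>g. 1 < k \<and> k < n})"
    using gale_even[OF assms(1), of 1 n] h assms(2) by auto
  moreover have "{k\<in>g. 1 < k \<and> k < n} = g"
  proof (intro set_eqI iffI)
    fix k assume "k \<in> g"
    then have "k \<in> {1..n}" "k \<noteq> 1" "k \<noteq> n" using g(1) h by auto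
    then show "k \<in> {k\<in>g. 1 < k \<and> k < n}" using `k \<in> g` by auto
  qed auto
  ultimately show False using g by simp
qed

lemma two_lt:
  assumes "finite I" "card I \<ge> 2"
  obtains a b where "a \<in> I" "b \<in> I" "(a::nat) < b"
proof -
  obtain a where a: "a \<in> I" using assms by fastforce
  have "card (I - {a}) \<ge> 1" using assms a by simp
  then have "I - {a} \<noteq> {}" by (metis card.empty not_one_le_zero)
  then obtain b where b: "b \<in> I" "b \<noteq> a" by auto
  show ?thesis
  proof (cases "a < b")
    case True then show ?thesis using that a b by blast
  next
    case False then have "b < a" using b by simp
    then show ?thesis using that a b by blast
  qed
qed

lemma gale_insert:
  assumes "g \<in> cyclic_facets d n" "\<rho> \<subseteq> g" "card \<rho> = d"
  obtains x where "g = insert x \<rho>"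
proof -
  have g: "finite g" "card g = d + 1" using gale_basic[OF assms(1)] by auto
  have fr0: "finite \<rho>" using assms(2) g(1) finite_subset by blast
  have "g - \<rho> \<noteq> {}"
  proof
    assume "g - \<rho> = {}"
    then have "g \<subseteq> \<rho>" by auto
    then have "card g \<le> card \<rho>" using fr0 card_mono by blast
    then show False using g assms(3) by simp
  qed
  then obtain x where x: "x \<in> g" "x \<notin> \<rho>" by auto
  have fr: "finite \<rho>" using assms(2) g(1) finite_subset by blast
  have "insert x \<rho> = g"
    by (rule card_subset_eq) (use g x assms fr in auto)
  then show ?thesis using that by blast
qed

theorem proposition3p6:
  fixes d n w :: nat and B :: "nat set set"
  assumes "d \<ge> 2" and "n \<ge> d + 2" and "w \<notin> {1..n}"
    and "B \<subseteq> cyclic_boundary d n"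
    and "PL_ball d B"
    and "neighborly_wrt ((d + 1) div 2 - 1) {1..n} B"
    and "stacked d ((d + 1) div 2 - 1) B"
  shows "two_colorable (facets (single_element_extension d (cyclic_boundary d n) B w))"
proof -
  have sc: "simplicial_complex B" using assms(5) unfolding PL_ball_def by (rule conjunct1)
  note CL = color_lemma[OF sc assms(4) assms(3)]
  show ?thesis
  proof (cases "d \<ge> 3 \<or> odd n")
    case True
    show ?thesis
    proof (rule CL[of "{x. even x}"])
      fix g assume g: "g \<in> cyclic_facets d n"
      obtain a where a: "a \<in> g" "1 < a" "a < n" using gale_interior[OF g assms(1)] by blast
      have "a - 1 \<in> g \<or> a + 1 \<in> g" using gale_isolated[OF g a] .
      then obtain b where b: "b \<in> g" "even b \<noteq> even a"
      proof
        assume "a - 1 \<in> g"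
        moreover have "even (a - 1) \<noteq> even a" using a(2) by (cases a) auto
        ultimately show ?thesis using that by blast
      next
        assume "a + 1 \<in> g"
        moreover have "even (a + 1) \<noteq> even a" by simp
        ultimately show ?thesis using that by blast
      qed
      show "(\<exists>y\<in>g. y \<in> {x. even x}) \<and> (\<exists>z\<in>g. z \<notin> {x. even x})"
      proof (cases "even a")
        case True
        then have "odd b" using b(2) by simp
        then show ?thesis using True a(1) b(1) unfolding mem_Collect_eq by blast
      next
        case False
        then have "even b" using b(2) by simp
        then show ?thesis using False a(1) b(1) unfolding mem_Collect_eq by blast
      qed
    next
      fix \<rho> g assume r: "\<rho> \<in> B" "card \<rho> = d" and g: "g \<in> cyclic_facets d n" "\<rho> \<subseteq> g"
      show "\<exists>z\<in>\<rho>. z \<notin> {x. even x}"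
      proof (rule ccontr)
        assume "\<not> (\<exists>z\<in>\<rho>. z \<notin> {x. even x})"
        then have ev: "\<forall>z\<in>\<rho>. z mod 2 = 0" by auto
        obtain x where gx: "g = insert x \<rho>" using gale_insert[OF g(1,2) r(2)] by blast
        have fr: "finite \<rho>" using r(2) assms(1) card_ge_0_finite[of \<rho>] by linarith
        have sub: "\<rho> \<subseteq> {1..n}" using g gale_basic(1)[OF g(1)] by auto
        have "card (\<rho> - {n}) \<ge> 2"
        proof (cases "d \<ge> 3")
          case True
          have "card \<rho> - 1 \<le> card (\<rho> - {n})" by (simp add: card_Diff_singleton_if)
          then show ?thesis using True r(2) by simp
        next
          case False
          then have "odd n" using `d \<ge> 3 \<or> odd n` by simp
          then have "n \<notin> \<rho>" using ev by auto
          then show ?thesis using r(2) assms(1) by simp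
        qed
        moreover have "finite (\<rho> - {n})" using fr by simp
        ultimately obtain a b where ab: "a \<in> \<rho> - {n}" "b \<in> \<rho> - {n}" "a < b"
          using two_lt[of "\<rho> - {n}"] by blast
        have "a \<in> {1..n}" "a mod 2 = 0" using ab(1) sub ev by auto
        then have "1 < a" by (cases "a = 1") auto
        moreover have "b < n"
        proof -
          have "b \<in> {1..n}" "b \<noteq> n" using ab(2) sub by auto
          then show ?thesis by simp
        qed
        ultimately show False using gale_core[OF g(1) gx ev, of a b] ab by auto
      qed
    qed
  next
    case False
    then have d2: "d = 2" and ne: "even n" using assms(1) by auto
    have n4: "n \<ge> 4" using assms(2) d2 by simp
    show ?thesis
    proof (cases "{1, n} \<in> B")
      case False
      show ?thesis
      proof (rule CL[of "{1, n}"])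
        fix g assume g: "g \<in> cyclic_facets d n"
        have "1 \<in> g \<or> n \<in> g" using gale_G1[of g n] g d2 n4 by auto
        moreover have "\<not> g \<subseteq> {1, n}"
        proof
          assume "g \<subseteq> {1, n}"
          then have "card g \<le> card {1, n}" by (intro card_mono) auto
          also have "\<dots> \<le> 2" by (simp add: card_insert_le_m1)
          finally show False using gale_basic(2)[OF g] d2 by simp
        qed
        ultimately show "(\<exists>y\<in>g. y \<in> {1, n}) \<and> (\<exists>z\<in>g. z \<notin> {1, n})" by auto
      next
        fix \<rho> g assume r: "\<rho> \<in> B" "card \<rho> = d" and g: "g \<in> cyclic_facets d n" "\<rho> \<subseteq> g"
        show "\<exists>z\<in>\<rho>. z \<notin> {1, n}"
        proof (rule ccontr)
          assume "\<not> (\<exists>z\<in>\<rho>. z \<notin> {1, n})"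
          then have "\<rho> \<subseteq> {1, n}" by auto
          moreover have "card {1, n} = (2::nat)" using n4 by simp
          ultimately have "\<rho> = {1, n}" using r(2) d2 by (intro card_subset_eq) auto
          then show False using r(1) `{1, n} \<notin> B` by simp
        qed
      qed
    next
      case True
      have k: "(d + 1) div 2 - 1 = 0" using d2 by simp
      have "{1, n} \<in> bdry d B"
        using assms(7) True n4 d2 unfolding stacked_def k by auto
      then obtain \<rho>0 where r0: "\<rho>0 \<in> B" "{1, n} \<subseteq> \<rho>0" "card \<rho>0 = 2"
        "card {f\<in>B. card f = 3 \<and> \<rho>0 \<subseteq> f} = 1"
        unfolding bdry_def d2 by auto
      then have "{f\<in>B. card f = 3 \<and> \<rho>0 \<subseteq> f} \<noteq> {}" by (metis card.empty zero_neq_one)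
      then obtain t0 where t0: "t0 \<in> B" "card t0 = 3" "{1, n} \<subseteq> t0" using r0(2) by blast
      obtain g0 where g0: "g0 \<in> cyclic_facets d n" "t0 \<subseteq> g0"
        using t0(1) assms(4) unfolding cyclic_boundary_def by auto
      have "t0 = g0"
        by (rule card_subset_eq) (use g0 gale_basic[OF g0(1)] t0 d2 in auto)
      then have t0g: "t0 \<in> cyclic_facets 2 n" using g0 d2 by simp
      have "\<not> t0 \<subseteq> {1, n}"
      proof
        assume "t0 \<subseteq> {1, n}"
        then have "card t0 \<le> card {1, n}" by (intro card_mono) auto
        also have "\<dots> \<le> 2" by (simp add: card_insert_le_m1)
        finally show False using t0 by simp
      qed
      then obtain y where y: "y \<in> t0" "y \<noteq> 1" "y \<noteq> n" by auto
      have "y \<in> {1..n}" using y(1) gale_basic(1)[OF t0g] by auto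
      then have y1: "1 < y" "y < n" using y by auto
      have t0eq: "t0 = {1, y, n}"
        by (rule card_subset_eq[symmetric]) (use t0 y y1 gale_basic[OF t0g] in auto)
      have "y - 1 \<in> t0 \<or> y + 1 \<in> t0" using gale_isolated[OF t0g y(1) y1] .
      then have "y = 2 \<or> y = n - 1" using t0eq y1 by auto
      then show ?thesis
      proof
        assume y2: "y = 2"
        show ?thesis
        proof (rule CL[of "{x. odd x \<and> 1 < x}"])
          fix g assume g: "g \<in> cyclic_facets d n" and gB: "g \<notin> B"
          have gg: "g \<in> cyclic_facets 2 n" using g d2 by simp
          have "1 \<in> g \<or> n \<in> g" using gale_G1[OF gg] n4 by auto
          then have z: "\<exists>z\<in>g. z \<notin> {x. odd x \<and> 1 < x}"
          proof
            assume "1 \<in> g" then show ?thesis by (intro bexI[of _ 1]) auto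
          next
            assume "n \<in> g" then show ?thesis using ne by (intro bexI[of _ n]) auto
          qed
          have "\<exists>y\<in>g. y \<in> {x. odd x \<and> 1 < x}"
          proof (rule ccontr)
            assume no: "\<not> (\<exists>y\<in>g. y \<in> {x. odd x \<and> 1 < x})"
            have "g \<subseteq> {1, 2, n}"
            proof
              fix a assume a: "a \<in> g"
              show "a \<in> {1, 2, n}"
              proof (cases "a = 1 \<or> a = n")
                case True then show ?thesis by auto
              next
                case False
                then have a1: "1 < a" "a < n" using a gale_basic(1)[OF g] by force+
                then have "even a" using no a by auto
                have "a - 1 \<in> g \<or> a + 1 \<in> g" using gale_isolated[OF g a a1] .
                moreover have "a + 1 \<notin> g" using no `even a` a1 by auto
                ultimately have "a - 1 \<in> g" by auto
                moreover have "odd (a - 1)" using `even a` a1 by presburger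
                ultimately have "\<not> 1 < a - 1" using no by auto
                then have "a - 1 = 1" using a1 by linarith
                then show ?thesis by auto
              qed
            qed
            moreover have "card {1, 2, n} = (3::nat)" using n4 by simp
            ultimately have "g = {1, 2, n}" using gale_basic(2)[OF g] d2
              by (intro card_subset_eq) auto
            then show False using gB t0eq y2 t0(1) by simp
          qed
          with z show "(\<exists>y\<in>g. y \<in> {x. odd x \<and> 1 < x}) \<and> (\<exists>z\<in>g. z \<notin> {x. odd x \<and> 1 < x})" by blast
        next
          fix \<rho> g assume r: "\<rho> \<in> B" "card \<rho> = d" and g: "g \<in> cyclic_facets d n" "\<rho> \<subseteq> g"
          show "\<exists>z\<in>\<rho>. z \<notin> {x. odd x \<and> 1 < x}"
          proof (rule ccontr)
            assume "\<not> (\<exists>z\<in>\<rho>. z \<notin> {x. odd x \<and> 1 < x})"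
            then have od: "\<forall>z\<in>\<rho>. odd z \<and> 1 < z" by auto
            then have ev: "\<forall>z\<in>\<rho>. z mod 2 = 1" by (simp add: odd_iff_mod_2_eq_one)
            obtain x where gx: "g = insert x \<rho>" using gale_insert[OF g(1,2) r(2)] by blast
            have fr: "finite \<rho>" using r(2) assms(1) card_ge_0_finite[of \<rho>] by linarith
            have sub: "\<rho> \<subseteq> {1..n}" using g gale_basic(1)[OF g(1)] by auto
            have c2: "card \<rho> \<ge> 2" using r(2) d2 by simp
            obtain a b where ab: "a \<in> \<rho>" "b \<in> \<rho>" "a < b"
              using two_lt[OF fr c2] by blast
            have a1: "1 < a" using ab(1) od by blast
            have "b \<noteq> n" using ab(2) od ne by blast
            moreover have "b \<le> n" using ab(2) sub by auto
            ultimately have bn: "b < n" by simp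
            show False using gale_core[OF g(1) gx ev ab(1) ab(2) a1 ab(3) bn] .
          qed
        qed
      next
        assume y2: "y = n - 1"
        show ?thesis
        proof (rule CL[of "{x. even x \<and> x < n}"])
          fix g assume g: "g \<in> cyclic_facets d n" and gB: "g \<notin> B"
          have gg: "g \<in> cyclic_facets 2 n" using g d2 by simp
          have "1 \<in> g \<or> n \<in> g" using gale_G1[OF gg] n4 by auto
          then have z: "\<exists>z\<in>g. z \<notin> {x. even x \<and> x < n}"
          proof
            assume "1 \<in> g" then show ?thesis by (intro bexI[of _ 1]) auto
          next
            assume "n \<in> g" then show ?thesis using ne by (intro bexI[of _ n]) auto
          qed
          have "\<exists>y\<in>g. y \<in> {x. even x \<and> x < n}"
          proof (rule ccontr)
            assume no: "\<not> (\<exists>y\<in>g. y \<in> {x. even x \<and> x < n})"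
            have "g \<subseteq> {1, n - 1, n}"
            proof
              fix a assume a: "a \<in> g"
              show "a \<in> {1, n - 1, n}"
              proof (cases "a = 1 \<or> a = n")
                case True then show ?thesis by auto
              next
                case False
                then have a1: "1 < a" "a < n" using a gale_basic(1)[OF g] by force+
                then have "odd a" using no a by auto
                have "a - 1 \<in> g \<or> a + 1 \<in> g" using gale_isolated[OF g a a1] .
                moreover have "a - 1 \<notin> g" using no `odd a` a1 by auto
                ultimately have "a + 1 \<in> g" by auto
                moreover have "even (a + 1)" using `odd a` by simp
                ultimately have "a + 1 = n" using no a1 by auto
                then show ?thesis by auto
              qed
            qed
            moreover have "card {1, n - 1, n} = (3::nat)" using n4 by simp
            ultimately have "g = {1, n - 1, n}" using gale_basic(2)[OF g] d2
              by (intro card_subset_eq) auto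
            then show False using gB t0eq y2 t0(1) by (simp add: insert_commute)
          qed
          with z show "(\<exists>y\<in>g. y \<in> {x. even x \<and> x < n}) \<and> (\<exists>z\<in>g. z \<notin> {x. even x \<and> x < n})" by blast
        next
          fix \<rho> g assume r: "\<rho> \<in> B" "card \<rho> = d" and g: "g \<in> cyclic_facets d n" "\<rho> \<subseteq> g"
          show "\<exists>z\<in>\<rho>. z \<notin> {x. even x \<and> x < n}"
          proof (rule ccontr)
            assume "\<not> (\<exists>z\<in>\<rho>. z \<notin> {x. even x \<and> x < n})"
            then have od: "\<forall>z\<in>\<rho>. even z \<and> z < n" by auto
            then have ev: "\<forall>z\<in>\<rho>. z mod 2 = 0" by auto
            obtain x where gx: "g = insert x \<rho>" using gale_insert[OF g(1,2) r(2)] by blast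
            have fr: "finite \<rho>" using r(2) assms(1) card_ge_0_finite[of \<rho>] by linarith
            have sub: "\<rho> \<subseteq> {1..n}" using g gale_basic(1)[OF g(1)] by auto
            have c2: "card \<rho> \<ge> 2" using r(2) d2 by simp
            obtain a b where ab: "a \<in> \<rho>" "b \<in> \<rho>" "a < b"
              using two_lt[OF fr c2] by blast
            have "a \<in> {1..n}" "even a" using ab(1) od sub by auto
            then have "1 < a" by (cases "a = 1") auto
            moreover have "b < n" using ab(2) od by auto
            ultimately show False using gale_core[OF g(1) gx ev, of a b] ab by auto
          qed
        qed
      qed
    qed
  qed
qed

end
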